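(* Let $m\in\mathbb{N}$, $r\ge0$, and let $\lambda$ be a nonzero real number. For all integers $l,n\ge0$, \[ D^{(r)}_{m,\lambda}(l+n,x)=\sum_{j=0}^{l}\sum_{k=0}^{n}\binom{n}{k}W^{(r)}_{m,\lambda}(l,j)\,x^{j}\,(mj-l\lambda)_{n-k,\lambda}\,D^{(r)}_{m,\lambda}(k,x) \] as polynomials in $x$; equivalently, with $a^{+}$ the boson creation operator, \[ D^{(r)}_{m,\lambda}(l+n,m a^{+})=\sum_{j=0}^{l}\sum_{k=0}^{n}\binom{n}{k}W^{(r)}_{m,\lambda}(l,j)\,m^{j}(a^{+})^{j}(mj-l\lambda)_{n-k,\lambda}D^{(r)}_{m,\lambda}(k,m a^{+}). \]
   Context: $(x)_{0,\lambda}=1$ and $(x)_{n,\lambda}=x(x-\lambda)\cdots(x-(n-1)\lambda)$ for $n\ge1$; $(x)_k=x(x-1)\cdots(x-k+1)$. For $m\in\mathbb{N}$ and $r\ge0$, the degenerate $r$-Whitney numbers of the second kind $W^{(r)}_{m,\lambda}(n,k)$ are defined by $(mx+r)_{n,\lambda}=\sum_{k=0}^{n}W^{(r)}_{m,\lambda}(n,k)m^{k}(x)_k$ ($n\ge0$), and the degenerate $r$-Dowling polynomials are $D^{(r)}_{m,\lambda}(n,x)=\sum_{k=0}^{n}W^{(r)}_{m,\lambda}(n,k)x^{k}$. *)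

theory Defs
  imports Complex_Main
begin

definition dff :: "real \<Rightarrow> real \<Rightarrow> nat \<Rightarrow> real" where
  "dff x lam n = (\<Prod>i<n. x - real i * lam)"

definition ff :: "real \<Rightarrow> nat \<Rightarrow> real" where
  "ff x k = (\<Prod>i<k. x - real i)"

definition dWhitney :: "nat \<Rightarrow> real \<Rightarrow> real \<Rightarrow> nat \<Rightarrow> nat \<Rightarrow> real" where
  "dWhitney m r lam n = (THE c. (\<forall>k>n. c k = 0) \<and>
      (\<forall>x::real. dff (real m * x + r) lam n = (\<Sum>k\<le>n. c k * real m ^ k * ff x k)))"

definition dDowling :: "nat \<Rightarrow> real \<Rightarrow> real \<Rightarrow> nat \<Rightarrow> real \<Rightarrow> real" where
  "dDowling m r lam n x = (\<Sum>k\<le>n. dWhitney m r lam n k * x ^ k)"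

end

theory Submission
  imports Defs "HOL-Computational_Algebra.Polynomial"
begin

definition opA :: "nat \<Rightarrow> real \<Rightarrow> real poly \<Rightarrow> real poly" where
  "opA m c P = smult c P + [:0,1:] * P + smult (real m) ([:0,1:] * pderiv P)"

fun It :: "nat \<Rightarrow> real \<Rightarrow> real \<Rightarrow> nat \<Rightarrow> real poly \<Rightarrow> real poly" where
  "It m lam c 0 P = P"
| "It m lam c (Suc n) P = opA m (c - real n * lam) (It m lam c n P)"

lemma opA_add: "opA m c (P + Q) = opA m c P + opA m c Q"
  by (simp add: opA_def pderiv_add algebra_simps smult_add_right)

lemma opA_smult: "opA m c (smult a P) = smult a (opA m c P)"
  by (simp add: opA_def pderiv_smult algebra_simps smult_add_right)

lemma opA_zero: "opA m c 0 = 0"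
  by (simp add: opA_def)

lemma opA_shiftc: "opA m (c + d) P = opA m c P + smult d P"
  by (simp add: opA_def smult_add_left algebra_simps)

lemma It_add: "It m lam c n (P + Q) = It m lam c n P + It m lam c n Q"
  by (induction n) (auto simp: opA_add)

lemma It_smult: "It m lam c n (smult a P) = smult a (It m lam c n P)"
  by (induction n) (auto simp: opA_smult)

lemma It_zero: "It m lam c n 0 = 0"
  by (induction n) (auto simp: opA_zero)

lemma It_sum: "It m lam c n (\<Sum>j\<in>S. f j) = (\<Sum>j\<in>S. It m lam c n (f j))"
  by (induction S rule: infinite_finite_induct) (auto simp: It_zero It_add)

lemma It_split: "It m lam c (l + n) P = It m lam (c - real l * lam) n (It m lam c l P)"
  by (induction n) (auto simp: algebra_simps)

lemma opA_Xpow: "opA m c ([:0,1:]^j * P) = [:0,1:]^j * opA m (c + real m * real j) P"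
proof -
  have d: "[:0,1:] * pderiv ([:0,1:]^j * P) = [:0,1:]^j * ([:0,1:] * pderiv P) + smult (real j) ([:0,1:]^j * P)"
  proof (cases j)
    case 0 then show ?thesis by simp
  next
    case (Suc i)
    show ?thesis unfolding Suc pderiv_mult pderiv_power_Suc
      by (simp add: pderiv_pCons algebra_simps)
  qed
  show ?thesis unfolding opA_def d
    by (simp add: algebra_simps smult_add_left smult_add_right)
qed

lemma It_Xpow: "It m lam c n ([:0,1:]^j * P) = [:0,1:]^j * It m lam (c + real m * real j) n P"
  by (induction n) (auto simp: opA_Xpow algebra_simps)

lemma dff_Suc: "dff s lam (Suc k) = dff s lam k * (s - real k * lam)"
  by (simp add: dff_def)

lemma ff_Suc: "ff x (Suc k) = ff x k * (x - real k)"
  by (simp add: ff_def)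

lemma It_binom:
  "It m lam c n 1 = (\<Sum>k\<le>n. smult (real (n choose k) * dff (c - r) lam (n - k)) (It m lam r k 1))"
proof (induction n)
  case 0 then show ?case by (simp add: dff_def)
next
  case (Suc n)
  define s where "s = c - r"
  define D where "D k = It m lam r k 1" for k
  have step: "opA m (c - real n * lam) (D k) = D (Suc k) + smult (s - real (n - k) * lam) (D k)"
    if "k \<le> n" for k
  proof -
    have "c - real n * lam = (r - real k * lam) + (s - real (n - k) * lam)"
      using that by (simp add: s_def of_nat_diff algebra_simps)
    then show ?thesis by (simp add: opA_shiftc D_def)
  qed
  define h where "h k = smult (real (n choose k) * dff s lam (Suc n - k)) (D k)" for k
  have "It m lam c (Suc n) 1 = opA m (c - real n * lam)
      (\<Sum>k\<le>n. smult (real (n choose k) * dff s lam (n - k)) (D k))"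
    using Suc by (simp add: s_def D_def)
  also have "\<dots> = (\<Sum>k\<le>n. smult (real (n choose k) * dff s lam (n - k)) (opA m (c - real n * lam) (D k)))"
  proof -
    have "opA m c' (sum f S) = sum (\<lambda>k. opA m c' (f k)) S" for c' f and S :: "nat set"
      by (induction S rule: infinite_finite_induct) (auto simp: opA_zero opA_add)
    then show ?thesis by (simp add: opA_smult)
  qed
  also have "\<dots> = (\<Sum>k\<le>n. smult (real (n choose k) * dff s lam (n - k)) (D (Suc k)))
      + (\<Sum>k\<le>n. h k)"
    unfolding h_def
    by (simp add: step sum.distrib smult_add_right Suc_diff_le dff_Suc mult.assoc)
  also have "(\<Sum>k\<le>n. h k) = (\<Sum>k\<le>Suc n. h k)"
    by (simp add: h_def)
  also have "\<dots> = h 0 + (\<Sum>k\<le>n. h (Suc k))"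
    by (rule sum.atMost_Suc_shift)
  finally have L: "It m lam c (Suc n) 1 = (\<Sum>k\<le>n. smult (real (n choose k) * dff s lam (n - k)) (D (Suc k)))
      + (h 0 + (\<Sum>k\<le>n. h (Suc k)))" .
  have "(\<Sum>k\<le>Suc n. smult (real (Suc n choose k) * dff s lam (Suc n - k)) (D k))
      = smult (dff s lam (Suc n)) (D 0) + (\<Sum>k\<le>n. smult (real (Suc n choose Suc k) * dff s lam (n - k)) (D (Suc k)))"
    by (subst sum.atMost_Suc_shift) simp
  also have "\<dots> = h 0 + (\<Sum>k\<le>n. smult (real (n choose k) * dff s lam (n - k)) (D (Suc k)))
      + (\<Sum>k\<le>n. h (Suc k))"
    by (simp add: h_def sum.distrib smult_add_left algebra_simps)
  finally show ?case using L by (simp add: s_def D_def algebra_simps)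
qed


lemma X_mult: "[:0,1:] * P = pCons 0 (P::real poly)"
  by (simp add: mult_pCons_left)

lemma coeff_opA: "coeff (opA m c P) k = (c + real m * real k) * coeff P k + (if k = 0 then 0 else coeff P (k - 1))"
  by (cases k) (simp_all add: opA_def coeff_pderiv X_mult algebra_simps)

lemma coeff_It_prop:
  "(\<forall>k>n. coeff (It m lam r n 1) k = 0) \<and>
   (\<forall>x::real. dff (real m * x + r) lam n = (\<Sum>k\<le>n. coeff (It m lam r n 1) k * real m ^ k * ff x k))"
proof (induction n)
  case 0 then show ?case by (simp add: dff_def ff_def coeff_1)
next
  case (Suc n)
  define c where "c = coeff (It m lam r n 1)"
  define d where "d = r - real n * lam"
  have c0: "\<forall>k>n. c k = 0" and IH: "\<And>x. dff (real m * x + r) lam n = (\<Sum>k\<le>n. c k * real m ^ k * ff x k)"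
    using Suc by (auto simp: c_def)
  have c': "coeff (It m lam r (Suc n) 1) k = (d + real m * real k) * c k + (if k = 0 then 0 else c (k - 1))" for k
    by (simp add: coeff_opA c_def d_def)
  have A: "\<forall>k>Suc n. coeff (It m lam r (Suc n) 1) k = 0"
  proof (intro allI impI)
    fix k assume "k > Suc n"
    then show "coeff (It m lam r (Suc n) 1) k = 0" unfolding c' using c0 by simp
  qed
  have B: "dff (real m * x + r) lam (Suc n) = (\<Sum>k\<le>Suc n. coeff (It m lam r (Suc n) 1) k * real m ^ k * ff x k)" for x
  proof -
    have "(\<Sum>k\<le>Suc n. coeff (It m lam r (Suc n) 1) k * real m ^ k * ff x k)
        = (\<Sum>k\<le>Suc n. (d + real m * real k) * c k * real m ^ k * ff x k)
          + (\<Sum>k\<le>Suc n. (if k = 0 then 0 else c (k - 1)) * real m ^ k * ff x k)"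
      unfolding c' by (simp add: sum.distrib algebra_simps)
    also have "(\<Sum>k\<le>Suc n. (d + real m * real k) * c k * real m ^ k * ff x k)
        = (\<Sum>k\<le>n. (d + real m * real k) * c k * real m ^ k * ff x k)"
      using c0 by simp
    also have "(\<Sum>k\<le>Suc n. (if k = 0 then 0 else c (k - 1)) * real m ^ k * ff x k)
        = (\<Sum>k\<le>n. c k * real m ^ Suc k * ff x (Suc k))"
      by (subst sum.atMost_Suc_shift) simp
    also have "(\<Sum>k\<le>n. (d + real m * real k) * c k * real m ^ k * ff x k) + \<dots>
        = (\<Sum>k\<le>n. c k * real m ^ k * ff x k * (real m * x + d))"
      by (simp add: sum.distrib[symmetric] ff_Suc algebra_simps)
    also have "\<dots> = dff (real m * x + r) lam n * (real m * x + d)"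
      by (simp add: IH sum_distrib_right)
    also have "\<dots> = dff (real m * x + r) lam (Suc n)"
      by (simp add: dff_Suc d_def algebra_simps)
    finally show ?thesis by simp
  qed
  show ?case using A B by blast
qed

lemma ff_nat_zero: "k > i \<Longrightarrow> ff (real i) k = 0"
  unfolding ff_def by (auto simp: prod_zero_iff intro: bexI[of _ i])

lemma ff_nat_self: "ff (real i) i \<noteq> 0"
  unfolding ff_def by (auto simp: prod_zero_iff)

lemma whitney_unique:
  fixes c d :: "nat \<Rightarrow> real"
  assumes m: "m \<ge> 1"
    and c0: "\<forall>k>n. c k = 0" and d0: "\<forall>k>n. d k = 0"
    and eq: "\<forall>x::real. (\<Sum>k\<le>n. c k * real m ^ k * ff x k) = (\<Sum>k\<le>n. d k * real m ^ k * ff x k)"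
  shows "c = d"
proof -
  have "c i = d i" if "i \<le> n" for i
    using that
  proof (induction i rule: less_induct)
    case (less i)
    define e where "e k = (c k - d k) * real m ^ k" for k
    have "(\<Sum>k\<le>n. e k * ff (real i) k) = (\<Sum>k\<le>n. c k * real m ^ k * ff (real i) k) - (\<Sum>k\<le>n. d k * real m ^ k * ff (real i) k)"
      by (simp add: e_def sum_subtractf[symmetric] algebra_simps)
    then have "(\<Sum>k\<le>n. e k * ff (real i) k) = 0"
      using eq[rule_format, of "real i"] by simp
    moreover have "(\<Sum>k\<le>n. e k * ff (real i) k) = (\<Sum>k\<in>{i}. e k * ff (real i) k)"
    proof (rule sum.mono_neutral_right)
      show "\<forall>k\<in>{..n} - {i}. e k * ff (real i) k = 0"
      proof
        fix k assume k: "k \<in> {..n} - {i}"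
        show "e k * ff (real i) k = 0"
        proof (cases "k < i")
          case True then show ?thesis using less k by (simp add: e_def)
        next
          case False then show ?thesis using k by (simp add: ff_nat_zero)
        qed
      qed
    qed (use less in auto)
    ultimately have "e i * ff (real i) i = 0" by simp
    then show ?case using ff_nat_self[of i] m by (simp add: e_def)
  qed
  moreover have "c i = d i" if "i > n" for i using that c0 d0 by simp
  ultimately show ?thesis by (metis ext not_le)
qed

lemma dWhitney_coeff:
  assumes "m \<ge> 1"
  shows "dWhitney m r lam n = coeff (It m lam r n 1)"
  unfolding dWhitney_def
proof (rule the_equality)
  show "(\<forall>k>n. coeff (It m lam r n 1) k = 0) \<and>
    (\<forall>x. dff (real m * x + r) lam n = (\<Sum>k\<le>n. coeff (It m lam r n 1) k * real m ^ k * ff x k))"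
    by (rule coeff_It_prop)
next
  fix c assume H: "(\<forall>k>n. c k = 0) \<and> (\<forall>x. dff (real m * x + r) lam n = (\<Sum>k\<le>n. c k * real m ^ k * ff x k))"
  show "c = coeff (It m lam r n 1)"
    using whitney_unique[OF assms, of n c "coeff (It m lam r n 1)"] H coeff_It_prop[of n m lam r]
    by auto
qed


lemma degree_It: "degree (It m lam r n 1) \<le> n"
  using coeff_It_prop[of n m lam r] by (intro degree_le) blast

lemma It_as_sum: "It m lam r n 1 = (\<Sum>k\<le>n. smult (coeff (It m lam r n 1) k) ([:0,1:]^k))"
  using poly_as_sum_of_monoms'[OF degree_It[of m lam r n]] by (simp add: monom_altdef)

lemma dDowling_poly:
  assumes "m \<ge> 1"
  shows "dDowling m r lam n x = poly (It m lam r n 1) x"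
proof -
  have "poly (It m lam r n 1) x = (\<Sum>k\<le>n. coeff (It m lam r n 1) k * x ^ k)"
    by (subst It_as_sum) (simp add: poly_sum)
  then show ?thesis by (simp add: dDowling_def dWhitney_coeff[OF assms])
qed

theorem theorem3p2:
  fixes m :: nat and r lam :: real and l n :: nat
  assumes "m \<ge> 1" and "r \<ge> 0" and "lam \<noteq> 0"
  shows "\<forall>x::real. dDowling m r lam (l + n) x =
    (\<Sum>j\<le>l. \<Sum>k\<le>n. real (n choose k) * dWhitney m r lam l j * x ^ j
        * dff (real m * real j - real l * lam) lam (n - k) * dDowling m r lam k x)"
proof
  fix x :: real
  define W where "W = coeff (It m lam r l 1)"
  define D where "D k = It m lam r k 1" for k
  have "It m lam r (l + n) 1 = It m lam (r - real l * lam) n (\<Sum>j\<le>l. smult (W j) ([:0,1:]^j * 1))"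
    using It_split[of m lam r l n 1] It_as_sum[of m lam r l] by (simp add: W_def)
  also have "\<dots> = (\<Sum>j\<le>l. smult (W j) ([:0,1:]^j * It m lam (r - real l * lam + real m * real j) n 1))"
    by (simp add: It_sum It_smult It_Xpow del: mult_1_right)
  also have "\<dots> = (\<Sum>j\<le>l. smult (W j) ([:0,1:]^j *
      (\<Sum>k\<le>n. smult (real (n choose k) * dff (real m * real j - real l * lam) lam (n - k)) (D k))))"
    by (subst It_binom[where r = r]) (simp add: D_def algebra_simps)
  finally have E: "poly (It m lam r (l + n) 1) x = (\<Sum>j\<le>l. W j * (x ^ j *
      (\<Sum>k\<le>n. real (n choose k) * dff (real m * real j - real l * lam) lam (n - k) * poly (D k) x)))"
    by (simp add: poly_sum)
  show "dDowling m r lam (l + n) x =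
    (\<Sum>j\<le>l. \<Sum>k\<le>n. real (n choose k) * dWhitney m r lam l j * x ^ j
        * dff (real m * real j - real l * lam) lam (n - k) * dDowling m r lam k x)"
    unfolding dDowling_poly[OF assms(1)] dWhitney_coeff[OF assms(1)] W_def[symmetric]
    using E by (simp add: D_def sum_distrib_left algebra_simps)
qed

end
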